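(* Let $X$ be a compact metric space and $f\colon X\to X$ a positively $n$-expansive homeomorphism which has the shadowing property and admits only finitely many chain recurrent classes. Then $X$ is finite.
   Context: $f$ is positively $n$-expansive if there exists $c>0$ such that for every $x\in X$ the set $W^s_c(x)=\{y: d(f^k(y),f^k(x))\leq c \ \forall k\geq0\}$ has at most $n$ points. $f$ has the shadowing property if for every $\varepsilon>0$ there is $\delta>0$ such that for every $(x_k)_{k\in\mathbb{Z}}$ with $d(f(x_k),x_{k+1})<\delta$ for all $k$ there is $y$ with $d(f^k(y),x_k)<\varepsilon$ for all $k$. A point $x$ is chain recurrent if for each $\varepsilon>0$ there is a nontrivial finite $\varepsilon$-pseudo orbit (a sequence $x_0,\dots,x_l$ with $d(f(x_k),x_{k+1})<\varepsilon$) starting and ending at $x$. The chain recurrent class of a chain recurrent point $x$ is the set of $y$ such that for every $\varepsilon>0$ there is a periodic $\varepsilon$-pseudo orbit containing both $x$ and $y$; the chain recurrent set is partitioned into these classes. *)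

theory Defs
  imports "HOL-Analysis.Analysis"
begin

definition pos_n_expansive :: "'a::metric_space set \<Rightarrow> ('a \<Rightarrow> 'a) \<Rightarrow> nat \<Rightarrow> bool" where
  "pos_n_expansive X f n \<longleftrightarrow> (\<exists>c>0. \<forall>x\<in>X.
     finite {y\<in>X. \<forall>k. dist ((f ^^ k) y) ((f ^^ k) x) \<le> c} \<and>
     card {y\<in>X. \<forall>k. dist ((f ^^ k) y) ((f ^^ k) x) \<le> c} \<le> n)"

definition zpow_iter :: "'a set \<Rightarrow> ('a \<Rightarrow> 'a) \<Rightarrow> int \<Rightarrow> 'a \<Rightarrow> 'a" where
  "zpow_iter X f k = (if k \<ge> 0 then f ^^ nat k else (inv_into X f) ^^ nat (- k))"

definition shadowing :: "'a::metric_space set \<Rightarrow> ('a \<Rightarrow> 'a) \<Rightarrow> bool" where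
  "shadowing X f \<longleftrightarrow> (\<forall>\<epsilon>>0. \<exists>\<delta>>0. \<forall>xs :: int \<Rightarrow> 'a.
     (\<forall>k. xs k \<in> X) \<and> (\<forall>k. dist (f (xs k)) (xs (k + 1)) < \<delta>) \<longrightarrow>
     (\<exists>y\<in>X. \<forall>k. dist (zpow_iter X f k y) (xs k) < \<epsilon>))"

definition pseudo_orbit :: "'a::metric_space set \<Rightarrow> ('a \<Rightarrow> 'a) \<Rightarrow> real \<Rightarrow> 'a list \<Rightarrow> bool" where
  "pseudo_orbit X f \<epsilon> xs \<longleftrightarrow> length xs \<ge> 2 \<and> set xs \<subseteq> X \<and>
     (\<forall>i. Suc i < length xs \<longrightarrow> dist (f (xs ! i)) (xs ! Suc i) < \<epsilon>)"

definition chain_recurrent :: "'a::metric_space set \<Rightarrow> ('a \<Rightarrow> 'a) \<Rightarrow> 'a \<Rightarrow> bool" where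
  "chain_recurrent X f x \<longleftrightarrow> x \<in> X \<and> (\<forall>\<epsilon>>0. \<exists>xs. pseudo_orbit X f \<epsilon> xs \<and> hd xs = x \<and> last xs = x)"

definition chain_class :: "'a::metric_space set \<Rightarrow> ('a \<Rightarrow> 'a) \<Rightarrow> 'a \<Rightarrow> 'a set" where
  "chain_class X f x = {y. \<forall>\<epsilon>>0. \<exists>xs. pseudo_orbit X f \<epsilon> xs \<and> hd xs = last xs \<and>
      x \<in> set xs \<and> y \<in> set xs}"

end

theory Submission
  imports Defs
begin

lemma funpow_period:
  assumes "(f ^^ L) p = p"
  shows "(f ^^ k) p = (f ^^ (k mod L)) p"
proof -
  have m: "(f ^^ (m * L)) p = p" for m
    by (induction m) (simp_all add: funpow_add assms)
  have "(f ^^ k) p = (f ^^ (k mod L + (k div L) * L)) p" by simp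
  also have "\<dots> = (f ^^ (k mod L)) ((f ^^ ((k div L) * L)) p)"
    by (simp only: funpow_add comp_apply)
  finally show ?thesis using m by simp
qed


lemma mod_step:
  fixes t D :: int
  assumes "D > 0"
  shows "(t + 1) mod D = (if t mod D + 1 < D then t mod D + 1 else 0)"
proof -
  have e: "(t + 1) mod D = (t mod D + 1) mod D" by (simp add: mod_add_left_eq)
  have a: "0 \<le> t mod D" "t mod D < D" using assms by auto
  show ?thesis
  proof (cases "t mod D + 1 < D")
    case True
    then show ?thesis using e a by (simp add: mod_pos_pos_trivial)
  next
    case False
    hence "t mod D + 1 = D" using a by linarith
    then show ?thesis using e False by simp
  qed
qed

lemma div_step:
  fixes t D :: int
  assumes "D > 0" "(t + 1) mod D \<noteq> 0"
  shows "(t + 1) div D = t div D"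
proof -
  have lt: "t mod D + 1 < D" using mod_step[OF assms(1), of t] assms(2) by (auto split: if_splits)
  have ge: "0 \<le> t mod D + 1" using assms(1) pos_mod_sign[of D t] by linarith
  have eq: "t + 1 = (t mod D + 1) + t div D * D" by simp
  have "(t + 1) div D = ((t mod D + 1) + t div D * D) div D"
    using arg_cong[OF eq, of "\<lambda>x. x div D"] .
  also have "\<dots> = t div D + (t mod D + 1) div D"
    using assms(1) div_mult_self1[of D "t mod D + 1" "t div D"] by linarith
  finally have "(t + 1) div D = t div D + (t mod D + 1) div D" .
  moreover have "(t mod D + 1) div D = 0" using ge lt by (rule div_pos_pos_trivial)
  ultimately show ?thesis by simp
qed
lemma orb_step:
  assumes "L > 0" "(f ^^ L) p = p"
  shows "f ((f ^^ nat (t mod int L)) p) = (f ^^ nat ((t + 1) mod int L)) p"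
proof (cases "t mod int L + 1 < int L")
  case True
  hence "nat ((t + 1) mod int L) = Suc (nat (t mod int L))"
    using mod_step[of "int L" t] assms(1) pos_mod_sign[of "int L" t] by (simp add: nat_add_distrib)
  thus ?thesis by simp
next
  case False
  hence e: "(t + 1) mod int L = 0" using mod_step[of "int L" t] assms(1) by simp
  have "t mod int L < int L" using assms(1) by simp
  hence "t mod int L = int L - 1" using False by simp
  hence "nat (t mod int L) = L - 1" by simp
  hence "f ((f ^^ nat (t mod int L)) p) = (f ^^ L) p"
    using assms(1) by (metis Suc_diff_1 funpow.simps(2) comp_apply)
  thus ?thesis using e assms(2) by simp
qed

lemma orb_nat:
  assumes "(f ^^ L) p = p"
  shows "(f ^^ nat (int k mod int L)) p = (f ^^ k) p"
proof -
  have "nat (int k mod int L) = k mod L" by (simp flip: of_nat_mod)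
  thus ?thesis using funpow_period[OF assms, of k] by simp
qed

lemma pigeon_nat:
  assumes "\<And>m::nat. h m \<in> A" "finite A"
  shows "\<exists>m1 m2. m1 < m2 \<and> h m1 = h m2"
proof -
  have "\<not> inj h"
  proof
    assume "inj h"
    hence "infinite (range h)" by (simp add: range_inj_infinite)
    moreover have "range h \<subseteq> A" using assms(1) by auto
    ultimately show False using assms(2) finite_subset by blast
  qed
  then obtain a b where "a \<noteq> b" "h a = h b" unfolding inj_def by blast
  thus ?thesis by (metis linorder_neqE_nat)
qed

lemma pigeon_fin:
  assumes "\<And>j. j \<le> n \<Longrightarrow> h j \<in> A" "finite A" "card A \<le> n"
  shows "\<exists>i j. i \<le> n \<and> j \<le> n \<and> i \<noteq> j \<and> h i = h j"
proof (rule ccontr)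
  assume "\<not> ?thesis"
  hence "inj_on h {..n}" unfolding inj_on_def by auto
  hence "card (h ` {..n}) = Suc n" by (simp add: card_image)
  moreover have "h ` {..n} \<subseteq> A" using assms(1) by auto
  hence "card (h ` {..n}) \<le> card A" using assms(2) card_mono by blast
  ultimately show False using assms(3) by simp
qed


theorem theorem2p5:
  fixes X :: "'a::metric_space set" and f :: "'a \<Rightarrow> 'a" and n :: nat
  assumes "compact X"
    and "\<exists>g. homeomorphism X X f g"
    and "pos_n_expansive X f n"
    and "shadowing X f"
    and "finite (chain_class X f ` {x. chain_recurrent X f x})"
  shows "finite X"
proof -
  obtain g where hom: "homeomorphism X X f g" using assms(2) by blast
  have fX: "f x \<in> X" if "x \<in> X" for x using hom that unfolding homeomorphism_def by blast
  have itX: "(f ^^ k) x \<in> X" if "x \<in> X" for x k using that by (induction k) (auto intro: fX)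
  have gf: "g (f x) = x" if "x \<in> X" for x using hom that unfolding homeomorphism_def by blast
  have contf: "continuous_on X f" using hom unfolding homeomorphism_def by blast
  have zp: "zpow_iter X f (int k) = f ^^ k" for k unfolding zpow_iter_def by simp
  have injit: "x = y" if "x \<in> X" "y \<in> X" "(f ^^ N) x = (f ^^ N) y" for N x y
    using that
  proof (induction N arbitrary: x y)
    case 0 then show ?case by simp
  next
    case (Suc N)
    have "(f ^^ N) (f x) = (f ^^ N) (f y)" using Suc.prems(3) by (simp add: funpow_swap1)
    hence "f x = f y" using Suc.IH fX Suc.prems by blast
    thus ?case using gf Suc.prems by metis
  qed
  obtain c where c: "c > 0" and W: "\<And>x. x \<in> X \<Longrightarrow> finite {y\<in>X. \<forall>k. dist ((f ^^ k) y) ((f ^^ k) x) \<le> c} \<and> card {y\<in>X. \<forall>k. dist ((f ^^ k) y) ((f ^^ k) x) \<le> c} \<le> n"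
    using assms(3) unfolding pos_n_expansive_def by blast
  define Wc where "Wc x = {y\<in>X. \<forall>k. dist ((f ^^ k) y) ((f ^^ k) x) \<le> c}" for x
  have Wfin: "finite (Wc x)" if "x \<in> X" for x using W[OF that] unfolding Wc_def by auto
  have Wcard: "card (Wc x) \<le> n" if "x \<in> X" for x using W[OF that] unfolding Wc_def by auto
  have shad: "\<exists>\<delta>>0. \<forall>xs :: int \<Rightarrow> 'a. (\<forall>k. xs k \<in> X) \<and> (\<forall>k. dist (f (xs k)) (xs (k + 1)) < \<delta>) \<longrightarrow> (\<exists>y\<in>X. \<forall>k. dist (zpow_iter X f k y) (xs k) < \<epsilon>)" if "\<epsilon> > 0" for \<epsilon>
    using assms(4) that unfolding shadowing_def by blast
  define P where "P = {y \<in> X. \<exists>m>0. (f ^^ m) y = y}"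
  have PX: "P \<subseteq> X" by (auto simp: P_def)
  have Pinv: "f p \<in> P" if "p \<in> P" for p
  proof -
    have "p \<in> X \<and> (\<exists>m>0. (f ^^ m) p = p)" using that by (simp add: P_def)
    then obtain m where "m > 0" "(f ^^ m) p = p" "p \<in> X" by blast
    moreover have "(f ^^ m) (f p) = f ((f ^^ m) p)" by (simp add: funpow_swap1)
    ultimately show ?thesis using fX unfolding P_def by auto
  qed
  have Pit: "(f ^^ i) p \<in> P" if "p \<in> P" for p i
    using that by (induction i) (auto intro: Pinv)

  have Pfin: "finite P"
  proof (rule ccontr)
    assume inf: "infinite P"
    have hc: "c / 2 > 0" using c by simp
    obtain \<delta> where d: "\<delta> > 0" and sh: "\<And>xs :: int \<Rightarrow> 'a. (\<forall>k. xs k \<in> X) \<Longrightarrow> (\<forall>k. dist (f (xs k)) (xs (k + 1)) < \<delta>) \<Longrightarrow> (\<exists>y\<in>X. \<forall>k. dist (zpow_iter X f k y) (xs k) < c / 2)"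
      using shad[OF hc] by blast
    obtain z where "z \<in> X" "z islimpt P" using Heine_Borel_imp_Bolzano_Weierstrass[OF assms(1) inf PX] by blast
    hence infQ: "infinite (P \<inter> ball z (\<delta>/2))" using d by (simp add: islimpt_eq_infinite_ball)
    from infinite_imp_nonempty[OF this] obtain p where p0: "p \<in> P \<inter> ball z (\<delta>/2)" by blast
    have p: "p \<in> P" "dist z p < \<delta>/2" using p0 by auto
    have pX: "p \<in> X" using p PX by auto
    have "infinite (P \<inter> ball z (\<delta>/2) - Wc p)" using infQ Wfin[OF pX] by (metis Diff_infinite_finite)
    from infinite_imp_nonempty[OF this] obtain q where q0: "q \<in> P \<inter> ball z (\<delta>/2) - Wc p" by blast
    have q: "q \<in> P" "dist z q < \<delta>/2" "q \<notin> Wc p" using q0 by auto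
    have qX: "q \<in> X" using q PX by auto
    have pq: "dist p q < \<delta>" using p(2) q(2) by (metis dist_commute dist_triangle_half_l)
    obtain k0 where k0: "c < dist ((f ^^ k0) q) ((f ^^ k0) p)" using q(3) qX unfolding Wc_def by (auto simp: not_le)
    obtain a where a: "a > 0" "(f ^^ a) p = p" using p(1) unfolding P_def by blast
    obtain b where b: "b > 0" "(f ^^ b) q = q" using q(1) unfolding P_def by blast
    define L where "L = a * b"
    have L0: "L > 0" using a b by (simp add: L_def)
    have Lp: "(f ^^ L) p = p" using funpow_period[OF a(2), of L] by (simp add: L_def)
    have Lq: "(f ^^ L) q = q" using funpow_period[OF b(2), of L] by (simp add: L_def)
    define orb where "orb u t = (f ^^ nat (t mod int L)) u" for u t
    define xs where "xs j t = (if t div int L = - int j - 1 then orb q t else orb p t)" for j :: nat and t :: int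
    have orbX: "orb u t \<in> X" if "u \<in> X" for u t using itX that by (simp add: orb_def)
    have orbs: "f (orb u t) = orb u (t + 1)" if "(f ^^ L) u = u" for u t
      using orb_step[OF L0 that] by (simp add: orb_def)
    have orbw: "orb u (t + 1) = u" if "(t + 1) mod int L = 0" for u t using that by (simp add: orb_def)
    have orbn: "orb u (int k) = (f ^^ k) u" if "(f ^^ L) u = u" for u k
      using orb_nat[OF that] by (simp add: orb_def)
    have xsX: "xs j t \<in> X" for j t using orbX pX qX by (simp add: xs_def)
    have xsps: "dist (f (xs j t)) (xs j (t + 1)) < \<delta>" for j t
    proof (cases "(t + 1) mod int L = 0")
      case True
      have "f (xs j t) \<in> {p, q}" using orbs[OF Lp] orbs[OF Lq] orbw[OF True] by (simp add: xs_def)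
      moreover have "xs j (t + 1) \<in> {p, q}" using orbw[OF True] by (simp add: xs_def)
      ultimately show ?thesis using pq d by (auto simp: dist_commute)
    next
      case False
      have "(t + 1) div int L = t div int L" using div_step[OF _ False] L0 by simp
      thus ?thesis using orbs[OF Lp] orbs[OF Lq] d by (simp add: xs_def)
    qed
    have "\<forall>j. \<exists>y\<in>X. \<forall>t. dist (zpow_iter X f t y) (xs j t) < c / 2"
      using sh xsX xsps by blast
    then obtain y where yX: "\<And>j. y j \<in> X" and ysh: "\<And>j t. dist (zpow_iter X f t (y j)) (xs j t) < c / 2"
      by metis
    have xsnat: "xs j (int k) = (f ^^ k) p" for j k
    proof -
      have "int k div int L \<ge> 0" by (metis of_nat_0_le_iff zdiv_int)
      hence "int k div int L \<noteq> - int j - 1" by linarith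
      thus ?thesis using orbn[OF Lp] by (simp add: xs_def)
    qed
    have yW: "y j \<in> Wc (y 0)" for j
    proof -
      have "dist ((f ^^ k) (y j)) ((f ^^ k) (y 0)) \<le> c" for k
      proof -
        have 1: "dist ((f ^^ k) (y j)) ((f ^^ k) p) < c / 2" using ysh[where j=j and t="int k"] by (simp add: zp xsnat)
        have 2: "dist ((f ^^ k) (y 0)) ((f ^^ k) p) < c / 2" using ysh[where j=0 and t="int k"] by (simp add: zp xsnat)
        show ?thesis using dist_triangle_half_l[OF 1 2] by simp
      qed
      thus ?thesis using yX unfolding Wc_def by blast
    qed
    obtain i j where ij: "i \<le> n" "j \<le> n" "i \<noteq> j" "y i = y j"
      using pigeon_fin[of n y "Wc (y 0)"] yW Wfin[OF yX] Wcard[OF yX] by blast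
    have close: "dist ((f ^^ r) q) ((f ^^ r) p) < c" if "r < L" for r
    proof -
      define t where "t = (- int j - 1) * int L + int r"
      have tdiv: "t div int L = - int j - 1" using that L0 by (simp add: t_def)
      have tmod: "t mod int L = int r" using that L0 by (simp add: t_def)
      have "xs j t = (f ^^ r) q" using tdiv tmod by (simp add: xs_def orb_def)
      moreover have "xs i t = (f ^^ r) p" using tdiv tmod ij(3) by (simp add: xs_def orb_def)
      ultimately show ?thesis using ysh[where j=j and t=t] ysh[where j=i and t=t] ij(4) dist_triangle_half_r by metis
    qed
    have "dist ((f ^^ k0) q) ((f ^^ k0) p) < c"
      using close[of "k0 mod L"] L0 funpow_period[OF Lp, of k0] funpow_period[OF Lq, of k0] by simp
    thus False using k0 by simp
  qed
  have near: "\<exists>K. \<forall>k\<ge>K. \<exists>p\<in>P. dist ((f ^^ k) x) p < \<rho>" if xX: "x \<in> X" and rho: "\<rho> > 0" "\<rho> \<le> c / 2" for x \<rho>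
  proof (rule ccontr)
    assume "\<not> ?thesis"
    hence unb: "\<forall>K. \<exists>k\<ge>K. \<forall>p\<in>P. \<rho> \<le> dist ((f ^^ k) x) p" by (auto simp: not_less)
    define S where "S = {k. \<forall>p\<in>P. \<rho> \<le> dist ((f ^^ k) x) p}"
    have infS: "infinite S" unfolding S_def infinite_nat_iff_unbounded_le using unb by blast
    obtain \<delta> where d: "\<delta> > 0" and sh: "\<And>xs :: int \<Rightarrow> 'a. (\<forall>k. xs k \<in> X) \<Longrightarrow> (\<forall>k. dist (f (xs k)) (xs (k + 1)) < \<delta>) \<Longrightarrow> (\<exists>y\<in>X. \<forall>k. dist (zpow_iter X f k y) (xs k) < \<rho>)"
      using shad[OF rho(1)] by blast
    define s where "s = enumerate S"
    have smono: "strict_mono s" using strict_mono_enumerate[OF infS] by (simp add: s_def)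
    have sS: "s i \<in> S" for i using enumerate_in_set[OF infS] by (simp add: s_def)
    define u where "u i = (f ^^ s i) x" for i
    have uX: "\<forall>i. u i \<in> X" using itX xX by (simp add: u_def)
    obtain l r where "l \<in> X" and rmono: "strict_mono r" and lim: "(u \<circ> r) \<longlonglongrightarrow> l"
      using compact_imp_seq_compact[OF assms(1)] uX unfolding seq_compact_def by blast
    have "Cauchy (u \<circ> r)" using lim by (rule LIMSEQ_imp_Cauchy)
    then obtain M where M: "\<forall>m\<ge>M. \<forall>m'\<ge>M. dist ((u \<circ> r) m) ((u \<circ> r) m') < \<delta>"
      using d unfolding Cauchy_def by blast
    define a where "a = s (r M)"
    define b where "b = s (r (Suc M))"
    have ab: "a < b" using smono rmono unfolding a_def b_def strict_mono_def by simp
    have dab: "dist ((f ^^ b) x) ((f ^^ a) x) < \<delta>" using M by (auto simp: a_def b_def u_def)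
    have aS: "a \<in> S" using sS by (simp add: a_def)
    define D where "D = b - a"
    have D0: "D > 0" using ab by (simp add: D_def)
    define xs where "xs t = (f ^^ (a + nat (t mod int D))) x" for t
    have xsX: "xs t \<in> X" for t using itX xX by (simp add: xs_def)
    have xsps: "dist (f (xs t)) (xs (t + 1)) < \<delta>" for t
    proof (cases "t mod int D + 1 < int D")
      case True
      hence "nat ((t + 1) mod int D) = Suc (nat (t mod int D))"
        using mod_step[of "int D" t] D0 pos_mod_sign[of "int D" t] by (simp add: nat_add_distrib)
      thus ?thesis using d by (simp add: xs_def)
    next
      case False
      hence e: "(t + 1) mod int D = 0" using mod_step[of "int D" t] D0 by simp
      have "t mod int D < int D" using D0 by simp
      hence "t mod int D = int D - 1" using False by simp
      hence "nat (t mod int D) = D - 1" by simp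
      hence sb: "Suc (a + nat (t mod int D)) = b" using D0 ab by (simp add: D_def)
      have "f (xs t) = (f ^^ Suc (a + nat (t mod int D))) x" by (simp add: xs_def)
      hence "f (xs t) = (f ^^ b) x" by (simp only: sb)
      thus ?thesis using e dab by (simp add: xs_def)
    qed
    obtain y where yX: "y \<in> X" and ysh: "\<And>t. dist (zpow_iter X f t y) (xs t) < \<rho>"
      using sh[of xs] xsX xsps by blast
    have xsn: "xs (int k) = (f ^^ (a + k mod D)) x" for k
      by (simp add: xs_def flip: of_nat_mod)
    have shift: "(f ^^ (m * D)) y \<in> Wc y" for m
    proof -
      have "dist ((f ^^ k) ((f ^^ (m * D)) y)) ((f ^^ k) y) \<le> c" for k
      proof -
        have 1: "dist ((f ^^ (m * D + k)) y) (xs (int (m * D + k))) < \<rho>" using ysh[of "int (m*D+k)"] by (simp only: zp)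
        have e1: "(f ^^ (m * D + k)) y = (f ^^ k) ((f ^^ (m * D)) y)" by (metis add.commute comp_apply funpow_add)
        have e2: "xs (int (m * D + k)) = xs (int k)" unfolding xsn by simp
        have h1: "dist ((f ^^ k) ((f ^^ (m * D)) y)) (xs (int k)) < \<rho>" using 1 e1 e2 by simp
        have 2: "dist ((f ^^ k) y) (xs (int k)) < \<rho>" using ysh[of "int k"] by (simp add: zp)
        have "dist ((f ^^ k) ((f ^^ (m * D)) y)) ((f ^^ k) y) \<le> dist ((f ^^ k) ((f ^^ (m * D)) y)) (xs (int k)) + dist ((f ^^ k) y) (xs (int k))"
          by (rule dist_triangle2)
        thus ?thesis using h1 2 rho by linarith
      qed
      thus ?thesis using itX yX unfolding Wc_def by blast
    qed
    obtain m1 m2 where m12: "m1 < m2" "(f ^^ (m1 * D)) y = (f ^^ (m2 * D)) y"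
      using pigeon_nat[of "\<lambda>m. (f ^^ (m * D)) y" "Wc y"] shift Wfin[OF yX] by blast
    define w where "w = (f ^^ (m1 * D)) y"
    have wX: "w \<in> X" using itX yX by (simp add: w_def)
    have e: "(m2 - m1) * D + m1 * D = m2 * D" using m12(1) by (simp add: diff_mult_distrib)
    have "(f ^^ ((m2 - m1) * D)) w = (f ^^ ((m2 - m1) * D + m1 * D)) y" by (simp add: w_def funpow_add)
    also have "\<dots> = (f ^^ (m2 * D)) y" by (simp only: e)
    also have "\<dots> = w" using m12(2) by (simp add: w_def)
    finally have "(f ^^ ((m2 - m1) * D)) w = w" .
    moreover have "(m2 - m1) * D > 0" using m12(1) D0 by simp
    ultimately have wP: "w \<in> P" using wX unfolding P_def by blast
    have "dist w ((f ^^ a) x) < \<rho>" using ysh[of "int (m1 * D)"] unfolding zp w_def xsn by simp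
    moreover have "\<rho> \<le> dist ((f ^^ a) x) w" using aS wP by (simp add: S_def)
    ultimately show False by (simp add: dist_commute)
  qed

  obtain \<eta> where eta: "\<eta> > 0" "\<And>p q. p \<in> P \<Longrightarrow> q \<in> P \<Longrightarrow> p \<noteq> q \<Longrightarrow> \<eta> \<le> dist p q"
  proof -
    define Ds where "Ds = (\<lambda>pq. dist (fst pq) (snd pq)) ` {pq \<in> P \<times> P. fst pq \<noteq> snd pq}"
    have fD: "finite Ds" using Pfin unfolding Ds_def by auto
    have mem: "dist p q \<in> Ds" if "p \<in> P" "q \<in> P" "p \<noteq> q" for p q
      using that unfolding Ds_def by force
    show ?thesis
    proof (cases "Ds = {}")
      case True
      show ?thesis using that[of 1] mem True by auto
    next
      case False
      have pos: "Min Ds > 0" using fD False unfolding Ds_def by (auto simp: Min_gr_iff)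
      show ?thesis using that[of "Min Ds"] pos mem fD Min_le by blast
    qed
  qed
  have uc: "uniformly_continuous_on X f" using compact_uniformly_continuous[OF contf assms(1)] .
  have e3: "\<eta> / 3 > 0" using eta(1) by simp
  obtain d where d: "d > 0" and dc: "\<forall>v\<in>X. \<forall>u\<in>X. dist u v < d \<longrightarrow> dist (f u) (f v) < \<eta> / 3"
    using uc e3 unfolding uniformly_continuous_on_def by blast
  define \<rho> where "\<rho> = min (min (c / 2) (\<eta> / 3)) d"
  have rho: "\<rho> > 0" "\<rho> \<le> c / 2" "\<rho> \<le> \<eta> / 3" "\<rho> \<le> d" using c eta(1) d by (auto simp: \<rho>_def)
  have allP: "x \<in> P" if xX: "x \<in> X" for x
  proof (rule ccontr)
    assume xnP: "x \<notin> P"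
    obtain K where K: "\<And>k. k \<ge> K \<Longrightarrow> \<exists>p\<in>P. dist ((f ^^ k) x) p < \<rho>" using near[OF xX rho(1,2)] by blast
    obtain w0 where w0: "w0 \<in> P" "dist ((f ^^ K) x) w0 < \<rho>" using K[of K] by blast
    have track: "dist ((f ^^ (K + i)) x) ((f ^^ i) w0) < \<rho>" for i
    proof (induction i)
      case 0 then show ?case using w0 by simp
    next
      case (Suc i)
      define q where "q = (f ^^ i) w0"
      have qP: "q \<in> P" using Pit w0(1) by (simp add: q_def)
      have qX: "q \<in> X" using qP PX by auto
      have zX: "(f ^^ (K + i)) x \<in> X" using itX xX by simp
      have 1: "dist (f ((f ^^ (K + i)) x)) (f q) < \<eta> / 3"
        using dc qX zX Suc.IH rho(4) by (simp add: q_def)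
      obtain p' where p': "p' \<in> P" "dist ((f ^^ Suc (K + i)) x) p' < \<rho>" using K[of "Suc (K+i)"] by auto
      have "f q = p'"
      proof (rule ccontr)
        assume "f q \<noteq> p'"
        hence "\<eta> \<le> dist (f q) p'" using eta(2) Pinv qP p'(1) by blast
        moreover have "dist (f q) p' \<le> dist ((f ^^ Suc (K + i)) x) (f q) + dist ((f ^^ Suc (K + i)) x) p'"
          by (rule dist_triangle3)
        ultimately show False using 1 p'(2) rho(3) eta(1) by simp
      qed
      thus ?case using p'(2) by (simp add: q_def)
    qed
    obtain l where l: "l > 0" "(f ^^ l) w0 = w0" using w0(1) unfolding P_def by blast
    define v where "v m = (f ^^ (K + m * l)) x" for m
    have vW: "v m \<in> Wc ((f ^^ K) x)" for m
    proof -
      have "dist ((f ^^ k) (v m)) ((f ^^ k) ((f ^^ K) x)) \<le> c" for k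
      proof -
        have ar: "K + (m * l + k) = k + (K + m * l)" by simp
        have e1: "(f ^^ k) (v m) = (f ^^ (K + (m * l + k))) x"
          by (simp only: ar v_def funpow_add comp_apply)
        have e2: "(f ^^ (m * l + k)) w0 = (f ^^ k) w0"
          using funpow_period[OF l(2), of "m * l + k"] funpow_period[OF l(2), of k] by simp
        have 1: "dist ((f ^^ k) (v m)) ((f ^^ k) w0) < \<rho>" using track[of "m * l + k"] e1 e2 by simp
        have e3: "(f ^^ k) ((f ^^ K) x) = (f ^^ (K + k)) x" by (metis add.commute comp_apply funpow_add)
        have 2: "dist ((f ^^ k) ((f ^^ K) x)) ((f ^^ k) w0) < \<rho>" using track[of k] e3 by simp
        have "dist ((f ^^ k) (v m)) ((f ^^ k) ((f ^^ K) x)) \<le> dist ((f ^^ k) (v m)) ((f ^^ k) w0) + dist ((f ^^ k) ((f ^^ K) x)) ((f ^^ k) w0)"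
          by (rule dist_triangle2)
        thus ?thesis using 1 2 rho(2) by linarith
      qed
      thus ?thesis using itX xX unfolding Wc_def v_def by blast
    qed
    obtain m1 m2 where m12: "m1 < m2" "v m1 = v m2"
      using pigeon_nat[of v "Wc ((f ^^ K) x)"] vW Wfin[OF itX[OF xX]] by blast
    define N where "N = K + m1 * l"
    define x' where "x' = (f ^^ ((m2 - m1) * l)) x"
    have x'X: "x' \<in> X" using itX xX by (simp add: x'_def)
    have ar: "N + (m2 - m1) * l = K + m2 * l" using m12(1) by (simp add: N_def diff_mult_distrib)
    have "(f ^^ N) x' = (f ^^ (N + (m2 - m1) * l)) x" by (simp add: x'_def funpow_add)
    also have "\<dots> = v m2" by (simp only: ar v_def)
    also have "\<dots> = (f ^^ N) x" using m12(2) by (simp add: v_def N_def)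
    finally have "x' = x" using injit x'X xX by blast
    moreover have "(m2 - m1) * l > 0" using m12(1) l(1) by simp
    ultimately have "x \<in> P" using xX unfolding P_def x'_def by blast
    thus False using xnP by simp
  qed
  have "X \<subseteq> P" using allP by blast
  thus ?thesis using Pfin finite_subset by blast
qed

end
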